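(* For every $\epsilon>0$ there exists $C_\epsilon>0$ such that $\big|W_{L,j}-\theta L^d\varphi^{*j}(0)\big|\le C_\epsilon L^{-2}$ for all real $L\ge1$ and all integers $1\le j\le L^{2-\epsilon}$.
   Context: Fix an integer $d\ge1$ and a real $\theta>0$. $X$ is a random vector in $\mathbb R^d$ with density $\varphi$, a Schwartz function, with $\mathbb E X=0$; $\varphi^{*j}$ is the $j$-fold convolution of $\varphi$. For $L>0$ and $j\ge1$, $W_{L,j}:=\theta L^d\sum_{k\in\mathbb Z^d}\varphi^{*j}(Lk)$. $C_\epsilon$ may depend on $d,\varphi,\theta,\epsilon$. *)

theory Defs
  imports "HOL-Analysis.Analysis"
begin

text \<open>Schwartz functions on R^d (d = CARD('n)): there is a family D of functions indexed by
  lists of coordinate directions (multi-indices of partial derivatives), with D [] = f,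
  each D beta Frechet differentiable everywhere with partial derivative in direction i equal to
  D (i # beta), and every (1 + |x|)^k * |D beta x| bounded.\<close>
definition schwartz :: "(real^'n \<Rightarrow> real) \<Rightarrow> bool" where
  "schwartz f \<longleftrightarrow> (\<exists>D :: 'n list \<Rightarrow> real^'n \<Rightarrow> real.
      D [] = f \<and>
      (\<forall>\<beta> x. (D \<beta> has_derivative (\<lambda>h. \<Sum>i\<in>UNIV. h $ i * D (i # \<beta>) x)) (at x)) \<and>
      (\<forall>\<beta> (k::nat). \<exists>B. \<forall>x. (1 + norm x) ^ k * \<bar>D \<beta> x\<bar> \<le> B))"

definition conv :: "(real^'n \<Rightarrow> real) \<Rightarrow> (real^'n \<Rightarrow> real) \<Rightarrow> real^'n \<Rightarrow> real" where
  "conv f g x = (\<integral>y. f y * g (x - y) \<partial>lborel)"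

text \<open>j-fold convolution power: conv_pow f j = f^{*j} for j \<ge> 1 (conv_pow f 0 = f is a dummy value).\<close>
fun conv_pow :: "(real^'n \<Rightarrow> real) \<Rightarrow> nat \<Rightarrow> real^'n \<Rightarrow> real" where
  "conv_pow f 0 = f"
| "conv_pow f (Suc 0) = f"
| "conv_pow f (Suc (Suc j)) = conv f (conv_pow f (Suc j))"

definition lattice_pt :: "('n \<Rightarrow> int) \<Rightarrow> real^'n" where
  "lattice_pt k = (\<chi> i. real_of_int (k i))"

definition W :: "real \<Rightarrow> (real^'n \<Rightarrow> real) \<Rightarrow> real \<Rightarrow> nat \<Rightarrow> real" where
  "W \<theta> \<phi> L j = \<theta> * L ^ CARD('n) * (\<Sum>\<^sub>\<infinity>k\<in>UNIV. conv_pow \<phi> j (L *\<^sub>R lattice_pt k))"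

end

theory Submission
  imports Defs "HOL-Probability.Sinc_Integral"
begin


lemma schwartz_facts:
  fixes \<phi> :: "real^'n \<Rightarrow> real"
  assumes "schwartz \<phi>"
  shows "continuous_on UNIV \<phi>" "\<And>k. \<exists>B. \<forall>x. (1 + norm x ^ 2) ^ k * \<bar>\<phi> x\<bar> \<le> B"
proof -
  obtain D :: "'n list \<Rightarrow> real^'n \<Rightarrow> real" where D0: "D [] = \<phi>"
    and Dd: "\<And>\<beta> x. (D \<beta> has_derivative (\<lambda>h. \<Sum>i\<in>UNIV. h $ i * D (i # \<beta>) x)) (at x)"
    and Db: "\<And>\<beta> (k::nat). \<exists>B. \<forall>x. (1 + norm x) ^ k * \<bar>D \<beta> x\<bar> \<le> B"
    using assms unfolding schwartz_def by blast
  have "isCont \<phi> x" for x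
    using has_derivative_continuous[OF Dd[of "[]" x]] D0 by simp
  then show "continuous_on UNIV \<phi>"
    by (intro continuous_at_imp_continuous_on) auto
  fix k :: nat
  obtain B where B: "\<And>x. (1 + norm x) ^ (2*k) * \<bar>D [] x\<bar> \<le> B" using Db by blast
  have "(1 + norm x ^ 2) ^ k * \<bar>\<phi> x\<bar> \<le> B" for x
  proof -
    have "(1 + norm x ^ 2) ^ k \<le> ((1 + norm x)^2) ^ k"
      by (intro power_mono) (auto simp: power2_eq_square algebra_simps)
    also have "\<dots> = (1 + norm x) ^ (2*k)" by (simp add: power_mult)
    finally have "(1 + norm x ^ 2) ^ k * \<bar>\<phi> x\<bar> \<le> (1 + norm x) ^ (2*k) * \<bar>\<phi> x\<bar>"
      by (intro mult_right_mono) auto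
    then show ?thesis using B[of x] D0 by simp
  qed
  then show "\<exists>B. \<forall>x. (1 + norm x ^ 2) ^ k * \<bar>\<phi> x\<bar> \<le> B" by blast
qed




lemma inv_sq_nn_finite: "(\<integral>\<^sup>+ t. ennreal (inverse (1 + t^2)) \<partial>lborel) < \<infinity>"
proof -
  have "integrable lborel (\<lambda>t::real. inverse (1 + t^2))"
    using integrable_inverse_1_plus_square unfolding set_integrable_def
    by (simp add: einterval_def)
  from integrableD(2)[OF this] show ?thesis by (simp add: less_top)
qed

lemma decay_integrable:
  "integrable lborel (\<lambda>y::'a::euclidean_space. 1 / (1 + norm y ^ 2) ^ DIM('a))"
proof (rule integrableI_bounded)
  show "(\<lambda>y::'a. 1 / (1 + norm y ^ 2) ^ DIM('a)) \<in> borel_measurable lborel" by measurable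
  have le: "ennreal (norm (1 / (1 + norm y ^ 2) ^ DIM('a))) \<le> (\<Prod>b\<in>Basis. ennreal (inverse (1 + (y \<bullet> b)^2)))" for y :: 'a
  proof -
    have "(\<Prod>b\<in>(Basis::'a set). 1 + (y \<bullet> b)^2) \<le> (\<Prod>b\<in>(Basis::'a set). 1 + norm y ^2)"
    proof (intro prod_mono conjI)
      fix b :: 'a assume "b \<in> Basis"
      then have "(y \<bullet> b)^2 \<le> (norm y)^2"
        by (metis Basis_le_norm abs_ge_zero power2_abs power_mono)
      then show "1 + (y \<bullet> b)^2 \<le> 1 + norm y ^ 2" by simp
    qed (auto simp: add_nonneg_nonneg)
    also have "\<dots> = (1 + norm y ^ 2) ^ DIM('a)" by simp
    finally have *: "(\<Prod>b\<in>(Basis::'a set). 1 + (y \<bullet> b)^2) \<le> (1 + norm y ^ 2) ^ DIM('a)" .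
    have pos: "0 < (\<Prod>b\<in>(Basis::'a set). 1 + (y \<bullet> b)^2)"
      by (intro prod_pos) (auto simp: add_pos_nonneg)
    have "1 / (1 + norm y ^ 2) ^ DIM('a) \<le> inverse (\<Prod>b\<in>(Basis::'a set). 1 + (y \<bullet> b)^2)"
      using * pos by (simp add: divide_simps)
    also have "\<dots> = (\<Prod>b\<in>(Basis::'a set). inverse (1 + (y \<bullet> b)^2))"
      using prod_inversef[of "\<lambda>b. 1 + (y \<bullet> b)^2" Basis] by (simp add: o_def)
    finally have "ennreal (1 / (1 + norm y ^ 2) ^ DIM('a)) \<le> ennreal (\<Prod>b\<in>(Basis::'a set). inverse (1 + (y \<bullet> b)^2))"
      by (rule ennreal_leI)
    also have "\<dots> = (\<Prod>b\<in>(Basis::'a set). ennreal (inverse (1 + (y \<bullet> b)^2)))"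
      by (rule prod_ennreal[symmetric]) (auto simp: add_nonneg_nonneg)
    finally show ?thesis by simp
  qed
  have "(\<integral>\<^sup>+ y. ennreal (norm (1 / (1 + norm y ^ 2) ^ DIM('a))) \<partial>(lborel::'a measure))
      \<le> (\<integral>\<^sup>+ y. (\<Prod>b\<in>Basis. ennreal (inverse (1 + (y \<bullet> b)^2))) \<partial>(lborel::'a measure))"
    by (rule nn_integral_mono, rule le)
  also have "\<dots> = (\<Prod>b\<in>(Basis::'a set). (\<integral>\<^sup>+ t. ennreal (inverse (1 + t^2)) \<partial>lborel))"
    by (rule nn_integral_lborel_prod) auto
  also have "\<dots> < \<infinity>"
    using inv_sq_nn_finite by (simp add: power_less_top_ennreal)
  finally show "(\<integral>\<^sup>+ y. ennreal (norm (1 / (1 + norm y ^ 2) ^ DIM('a))) \<partial>(lborel::'a measure)) < \<infinity>" .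
qed




lemma nn_integral_translate:
  fixes g :: "'a::euclidean_space \<Rightarrow> ennreal"
  assumes [measurable]: "g \<in> borel_measurable borel"
  shows "(\<integral>\<^sup>+x. g (x - y) \<partial>lborel) = integral\<^sup>N lborel g"
proof -
  have "(\<integral>\<^sup>+x. g (x - y) \<partial>lborel) = (\<integral>\<^sup>+x. g (x - y) \<partial>(distr lborel borel ((+) y)))"
    by (simp add: lborel_distr_plus)
  also have "\<dots> = (\<integral>\<^sup>+x. g ((y + x) - y) \<partial>lborel)"
    by (subst nn_integral_distr) auto
  finally show ?thesis by simp
qed

lemma nn_integral_reflect:
  fixes g :: "'a::euclidean_space \<Rightarrow> ennreal"
  assumes [measurable]: "g \<in> borel_measurable borel"
  shows "(\<integral>\<^sup>+x. g (y - x) \<partial>lborel) = integral\<^sup>N lborel g"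
proof -
  have L: "lborel = distr lborel borel ((-) y)"
    using lborel_affine[of "-1" y] by (simp add: density_1)
  have "(\<integral>\<^sup>+x. g (y - x) \<partial>lborel) = (\<integral>\<^sup>+x. g (y - x) \<partial>(distr lborel borel ((-) y)))"
    by (subst L[symmetric]) simp
  also have "\<dots> = (\<integral>\<^sup>+x. g (y - (y - x)) \<partial>lborel)"
    by (subst nn_integral_distr) auto
  finally show ?thesis by simp
qed

lemma mult_le_helper: "0 \<le> a \<Longrightarrow> b \<le> c \<Longrightarrow> a * b \<le> c * (a::real)"
  by (simp add: mult.commute mult_left_mono)

definition Q :: "'a::real_normed_vector \<Rightarrow> real" where "Q x = 1 + norm x ^ 2"

lemma Q_ge1: "Q x \<ge> 1" by (simp add: Q_def)
lemma Q_pos: "Q x > 0" by (simp add: Q_def add_pos_nonneg)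
lemma Q_meas[measurable]: "Q \<in> borel_measurable borel"
  unfolding Q_def by measurable

locale dens =
  fixes \<phi> :: "real^'n \<Rightarrow> real"
  assumes meas[measurable]: "\<phi> \<in> borel_measurable borel"
    and nonneg: "\<And>x. \<phi> x \<ge> 0"
    and decay: "\<And>k. \<exists>B. \<forall>x. Q x ^ k * \<phi> x \<le> B"
    and int1: "integral\<^sup>L lborel \<phi> = 1"
    and mean0: "(\<integral>x. \<phi> x *\<^sub>R x \<partial>lborel) = 0"
begin

lemma poly_integrable: "integrable lborel (\<lambda>x. Q x ^ k * \<phi> x)"
proof -
  obtain B where B: "\<And>x. Q x ^ (k + CARD('n)) * \<phi> x \<le> B" using decay by blast
  have "integrable lborel (\<lambda>y::real^'n. B * (1 / (1 + norm y ^ 2) ^ DIM(real^'n)))"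
    using decay_integrable by (rule integrable_mult_right)
  then show ?thesis
  proof (rule Bochner_Integration.integrable_bound)
    show "(\<lambda>x. Q x ^ k * \<phi> x) \<in> borel_measurable lborel" by measurable
    show "AE x in lborel. norm (Q x ^ k * \<phi> x) \<le> norm (B * (1 / (1 + norm x ^ 2) ^ DIM(real^'n)))"
    proof (rule AE_I2)
      fix x :: "real^'n"
      have q: "Q x ^ CARD('n) > 0" by (rule zero_less_power[OF Q_pos])
      have "Q x ^ k * \<phi> x * Q x ^ CARD('n) \<le> B" using B[of x] by (simp add: power_add algebra_simps)
      then have "Q x ^ k * \<phi> x \<le> B / Q x ^ CARD('n)" using q by (simp add: field_simps)
      moreover have "0 \<le> Q x ^ k * \<phi> x" by (rule mult_nonneg_nonneg[OF zero_le_power[OF less_imp_le[OF Q_pos]] nonneg])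
      moreover have "B / Q x ^ CARD('n) \<le> \<bar>B\<bar> / Q x ^ CARD('n)"
        by (rule divide_right_mono) (use q in auto)
      ultimately show "norm (Q x ^ k * \<phi> x) \<le> norm (B * (1 / (1 + norm x ^ 2) ^ DIM(real^'n)))"
        by (simp add: Q_def)
    qed
  qed
qed

lemma phi_integrable: "integrable lborel \<phi>"
  using poly_integrable[of 0] by simp

lemma nn_phi: "(\<integral>\<^sup>+x. ennreal (\<phi> x) \<partial>lborel) = 1"
  using nn_integral_eq_integral[OF phi_integrable] nonneg int1 by simp

definition M0 where "M0 = (SOME B. \<forall>x. Q x ^ 0 * \<phi> x \<le> B)"
lemma phi_le_M0: "\<phi> x \<le> M0"
  using someI_ex[OF decay[of 0]] unfolding M0_def by simp
lemma M0_nonneg: "0 \<le> M0" using phi_le_M0[of 0] nonneg[of 0] by simp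

definition P :: "nat \<Rightarrow> real^'n \<Rightarrow> real" where "P j = conv_pow \<phi> (Suc j)"

lemma P_0: "P 0 = \<phi>" by (simp add: P_def)
lemma P_Suc: "P (Suc j) x = (\<integral>y. \<phi> y * P j (x - y) \<partial>lborel)"
  by (simp add: P_def conv_def)

lemma P_props: "P j \<in> borel_measurable borel \<and> (\<forall>x. 0 \<le> P j x) \<and> (\<forall>x. P j x \<le> M0)
   \<and> (\<integral>\<^sup>+x. ennreal (P j x) \<partial>lborel) = 1"
proof (induction j)
  case 0 then show ?case using nonneg phi_le_M0 nn_phi by (simp add: P_0)
next
  case (Suc j)
  then have m[measurable]: "P j \<in> borel_measurable borel" and nn: "\<And>x. 0 \<le> P j x"
    and bd: "\<And>x. P j x \<le> M0" and one: "(\<integral>\<^sup>+x. ennreal (P j x) \<partial>lborel) = 1" by auto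
  have int: "integrable lborel (\<lambda>y. \<phi> y * P j (x - y))" for x
  proof (rule Bochner_Integration.integrable_bound[OF integrable_mult_right[OF phi_integrable, of M0]])
    show "(\<lambda>y. \<phi> y * P j (x - y)) \<in> borel_measurable lborel" by measurable
    show "AE y in lborel. norm (\<phi> y * P j (x - y)) \<le> norm (M0 * \<phi> y)"
      using nonneg nn bd M0_nonneg by (auto intro!: AE_I2 simp: abs_mult mult.commute[of M0] mult_left_mono)
  qed
  have meas': "P (Suc j) \<in> borel_measurable borel"
    unfolding P_Suc[abs_def] by measurable
  have nn': "0 \<le> P (Suc j) x" for x
    unfolding P_Suc using nonneg nn by (intro integral_nonneg_AE) auto
  have bd': "P (Suc j) x \<le> M0" for x
  proof -
    have "P (Suc j) x \<le> (\<integral>y. M0 * \<phi> y \<partial>lborel)"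
      unfolding P_Suc using int phi_integrable nonneg bd
      by (intro integral_mono) (auto intro!: mult_le_helper)
    also have "\<dots> = M0" using int1 by simp
    finally show ?thesis .
  qed
  have eq: "ennreal (P (Suc j) x) = (\<integral>\<^sup>+y. ennreal (\<phi> y * P j (x - y)) \<partial>lborel)" for x
    unfolding P_Suc using int nonneg nn by (subst nn_integral_eq_integral) auto
  have "(\<integral>\<^sup>+x. ennreal (P (Suc j) x) \<partial>lborel) = (\<integral>\<^sup>+x. \<integral>\<^sup>+y. ennreal (\<phi> y * P j (x - y)) \<partial>lborel \<partial>lborel)"
    by (simp add: eq)
  also have "\<dots> = (\<integral>\<^sup>+y. \<integral>\<^sup>+x. ennreal (\<phi> y * P j (x - y)) \<partial>lborel \<partial>lborel)"
    by (rule lborel_pair.Fubini'[symmetric]) measurable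
  also have "\<dots> = (\<integral>\<^sup>+y. ennreal (\<phi> y) * \<integral>\<^sup>+x. ennreal (P j (x - y)) \<partial>lborel \<partial>lborel)"
    using nonneg nn by (subst nn_integral_cmult[symmetric]) (auto simp: ennreal_mult)
  also have "\<dots> = (\<integral>\<^sup>+y. ennreal (\<phi> y) \<partial>lborel)"
    using one by (subst nn_integral_translate) auto
  also have "\<dots> = 1" by (rule nn_phi)
  finally show ?case using meas' nn' bd' by auto
qed

end



lemma binom_ineq:
  fixes A u b :: real
  assumes A: "A \<ge> 1" and Au: "0 \<le> A + u" and u2: "u^2 \<le> A * b^2" and u1: "\<bar>u\<bar> \<le> A * b" and b: "b \<ge> 1"
  shows "(A + u) ^ Suc n \<le> A ^ Suc n + real (Suc n) * A ^ n * u + 3 ^ Suc n * A ^ n * b ^ Suc n"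
proof (induction n)
  case 0 then show ?case using b by simp
next
  case (Suc n)
  define a where "a = A ^ n"
  have a0: "a \<ge> 1" unfolding a_def using A by (simp add: one_le_power)
  have IH: "(A + u) ^ Suc n \<le> A * a + real (Suc n) * a * u + 3 ^ Suc n * a * b ^ Suc n"
    using Suc by (simp add: a_def)
  have "(A + u) ^ Suc (Suc n) = (A + u) * (A + u) ^ Suc n" by simp
  also have "\<dots> \<le> (A + u) * (A * a + real (Suc n) * a * u + 3 ^ Suc n * a * b ^ Suc n)"
    by (rule mult_left_mono[OF IH Au])
  also have "\<dots> = A * (A * a) + real (Suc (Suc n)) * (A * a) * u + real (Suc n) * a * u^2
      + 3 ^ Suc n * (A * a) * b ^ Suc n + 3 ^ Suc n * a * u * b ^ Suc n"
    by (simp add: algebra_simps power2_eq_square)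
  also have "\<dots> \<le> A * (A * a) + real (Suc (Suc n)) * (A * a) * u + real (Suc n) * (A * a) * b ^ Suc (Suc n)
      + 3 ^ Suc n * (A * a) * b ^ Suc (Suc n) + 3 ^ Suc n * (A * a) * b ^ Suc (Suc n)"
  proof -
    have bb: "b ^ Suc n \<le> b ^ Suc (Suc n)" using b by (simp add: power_increasing)
    have b2: "b^2 \<le> b ^ Suc (Suc n)" using b by (intro power_increasing) auto
    have t1: "real (Suc n) * a * u^2 \<le> real (Suc n) * (A * a) * b ^ Suc (Suc n)"
    proof -
      have "a * u^2 \<le> a * (A * b^2)" using u2 a0 by (intro mult_left_mono) auto
      also have "\<dots> \<le> a * (A * b ^ Suc (Suc n))" using b2 a0 A by (intro mult_left_mono) auto
      finally have "real (Suc n) * (a * u^2) \<le> real (Suc n) * (a * (A * b ^ Suc (Suc n)))"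
        by (rule mult_left_mono) auto
      then show ?thesis by (simp add: algebra_simps)
    qed
    have t2: "3 ^ Suc n * (A * a) * b ^ Suc n \<le> 3 ^ Suc n * (A * a) * b ^ Suc (Suc n)"
      using bb a0 A by (intro mult_left_mono) auto
    have t3: "3 ^ Suc n * a * u * b ^ Suc n \<le> 3 ^ Suc n * (A * a) * b ^ Suc (Suc n)"
    proof -
      have "u * b ^ Suc n \<le> \<bar>u\<bar> * b ^ Suc n" using b by (intro mult_right_mono) auto
      also have "\<dots> \<le> (A * b) * b ^ Suc n" using u1 b by (intro mult_right_mono) auto
      also have "\<dots> = A * b ^ Suc (Suc n)" by simp
      finally have "a * (u * b ^ Suc n) \<le> a * (A * b ^ Suc (Suc n))" using a0 by (intro mult_left_mono) auto
      then have "3 ^ Suc n * (a * (u * b ^ Suc n)) \<le> 3 ^ Suc n * (a * (A * b ^ Suc (Suc n)))"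
        by (rule mult_left_mono) auto
      then show ?thesis by (simp add: algebra_simps)
    qed
    show ?thesis using t1 t2 t3 by linarith
  qed
  also have "\<dots> \<le> A ^ Suc (Suc n) + real (Suc (Suc n)) * A ^ Suc n * u + 3 ^ Suc (Suc n) * A ^ Suc n * b ^ Suc (Suc n)"
  proof -
    have "real (Suc n) \<le> 3 ^ Suc n"
    proof -
      have "Suc n < 3 ^ Suc n" by (rule less_exp[THEN less_le_trans]) (rule power_mono, auto)
      then show ?thesis by (metis of_nat_le_iff of_nat_numeral of_nat_power less_imp_le)
    qed
    then have "real (Suc n) + 3 ^ Suc n + 3 ^ Suc n \<le> 3 ^ Suc (Suc n)" by simp
    moreover have "0 \<le> (A * a) * b ^ Suc (Suc n)" using a0 A b by simp
    ultimately have "(real (Suc n) + 3 ^ Suc n + 3 ^ Suc n) * ((A * a) * b ^ Suc (Suc n))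
        \<le> 3 ^ Suc (Suc n) * ((A * a) * b ^ Suc (Suc n))" by (rule mult_right_mono)
    then show ?thesis by (simp add: a_def algebra_simps)
  qed
  finally show ?case .
qed

lemma st_ineq:
  fixes p q :: real
  assumes "p \<ge> 0" "q \<ge> 0"
  shows "2*p*q + q^2 \<le> (1+p^2) * (4*(1+q^2))"
    and "(2*p*q + q^2)^2 \<le> (1+p^2) * (4*(1+q^2))^2"
proof -
  have st: "2*p*q \<le> p^2 + q^2" using sum_squares_bound[of p q] by (simp add: power2_eq_square)
  have pp: "0 \<le> p^2 * q^2" "0 \<le> q^2" "0 \<le> p^2" by auto
  have e: "(1+p^2)*(4*(1+q^2)) = 4 + 4*q^2 + 4*p^2 + 4*(p^2*q^2)" by (simp add: algebra_simps)
  show "2*p*q + q^2 \<le> (1+p^2) * (4*(1+q^2))"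
    using st pp e by linarith
  have "(2*p*q + q^2)^2 \<le> 2 * (2*p*q)^2 + 2 * (q^2)^2"
    using sum_squares_bound[of "2*p*q" "q^2"] by (simp add: power2_eq_square algebra_simps)
  also have "\<dots> = 8 * (p^2 * q^2) + 2 * q^4" by (simp add: power2_eq_square power4_eq_xxxx algebra_simps)
  also have "\<dots> \<le> (1+p^2) * (4*(1+q^2))^2"
  proof -
    have "(1+p^2) * (4*(1+q^2))^2 = 16 * (1 + 2*q^2 + q^4 + p^2 + 2*(p^2*q^2) + p^2*q^4)"
      by (simp add: power2_eq_square power4_eq_xxxx algebra_simps)
    moreover have "0 \<le> p^2*q^4" "0 \<le> q^4" using pp by auto
    ultimately show ?thesis using pp by simp
  qed
  finally show "(2*p*q + q^2)^2 \<le> (1+p^2) * (4*(1+q^2))^2" .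
qed




lemma Q_add: "Q (z + y) = Q z + (2 * (z \<bullet> y) + norm y ^ 2)"
  for z y :: "'a::real_inner"
  by (simp add: Q_def power2_norm_eq_inner inner_add_left inner_add_right inner_commute algebra_simps)

lemma Q_add_le: "Q (z + y) \<le> 2 * Q z * Q y"
  for z y :: "'a::real_inner"
proof -
  have "norm (z + y) \<le> norm z + norm y" by (rule norm_triangle_ineq)
  then have "norm (z + y) ^ 2 \<le> (norm z + norm y) ^ 2" by (intro power_mono) auto
  also have "\<dots> \<le> 2 * norm z ^ 2 + 2 * norm y ^ 2"
    using sum_squares_bound[of "norm z" "norm y"] by (simp add: power2_eq_square algebra_simps)
  finally have "norm (z + y) ^ 2 \<le> 2 * norm z ^ 2 + 2 * norm y ^ 2" .
  moreover have "0 \<le> norm z ^ 2 * norm y ^ 2" by simp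
  moreover have "2 * Q z * Q y = 2 + 2*norm z^2 + 2*norm y^2 + 2*(norm z^2*norm y^2)"
    by (simp add: Q_def algebra_simps)
  moreover have "Q (z + y) = 1 + norm (z + y) ^ 2" by (simp add: Q_def)
  ultimately show ?thesis by linarith
qed

lemma Q_pointwise:
  fixes z y :: "'a::real_inner"
  shows "Q (z + y) ^ Suc n \<le> Q z ^ Suc n + (real (Suc n) * Q z ^ n * 2) * (z \<bullet> y)
     + ((real (Suc n) + 3 ^ Suc n) * 4 ^ Suc n * Q z ^ n) * Q y ^ Suc n"
proof -
  define A where "A = Q z"
  define u where "u = 2 * (z \<bullet> y) + norm y ^ 2"
  define b where "b = 4 * Q y"
  have A1: "A \<ge> 1" using Q_ge1 by (simp add: A_def)
  have Au: "A + u = Q (z + y)" by (simp add: A_def u_def Q_add)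
  have b1: "b \<ge> 1" using Q_ge1[of y] by (simp add: b_def)
  have uabs: "\<bar>u\<bar> \<le> 2 * norm z * norm y + norm y ^ 2"
  proof -
    have "\<bar>z \<bullet> y\<bar> \<le> norm z * norm y" by (rule Cauchy_Schwarz_ineq2)
    then show ?thesis using zero_le_power2[of "norm y"] unfolding u_def abs_le_iff by linarith
  qed
  have u1: "\<bar>u\<bar> \<le> A * b"
    using uabs st_ineq(1)[of "norm z" "norm y"] by (simp add: A_def b_def Q_def)
  have u2: "u^2 \<le> A * b^2"
  proof -
    have "u^2 = \<bar>u\<bar>^2" by simp
    also have "\<dots> \<le> (2 * norm z * norm y + norm y ^ 2)^2" using uabs by (intro power_mono) auto
    also have "\<dots> \<le> A * b^2" using st_ineq(2)[of "norm z" "norm y"] by (simp add: A_def b_def Q_def)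
    finally show ?thesis .
  qed
  have main: "(A + u) ^ Suc n \<le> A ^ Suc n + real (Suc n) * A ^ n * u + 3 ^ Suc n * A ^ n * b ^ Suc n"
    by (rule binom_ineq[OF A1 _ u2 u1 b1]) (use Au Q_ge1[of "z+y"] in simp)
  have t2: "norm y ^ 2 \<le> 4 ^ Suc n * Q y ^ Suc n"
  proof -
    have "norm y ^ 2 \<le> Q y" by (simp add: Q_def)
    also have "\<dots> \<le> Q y ^ Suc n" using Q_ge1[of y] by (metis power_one_right power_increasing Suc_eq_plus1 le_add2)
    also have "\<dots> \<le> 4 ^ Suc n * Q y ^ Suc n"
    proof -
      have "1 \<le> (4::real) ^ Suc n" by (rule one_le_power) simp
      from mult_right_mono[OF this, of "Q y ^ Suc n"] show ?thesis using Q_ge1[of y] by simp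
    qed
    finally show ?thesis .
  qed
  have An: "0 \<le> A ^ n" using A1 by simp
  have "real (Suc n) * A ^ n * u = (real (Suc n) * A ^ n * 2) * (z \<bullet> y) + real (Suc n) * A ^ n * norm y ^ 2"
    by (simp add: u_def algebra_simps)
  moreover have "real (Suc n) * A ^ n * norm y ^ 2 \<le> real (Suc n) * A ^ n * (4 ^ Suc n * Q y ^ Suc n)"
    using t2 An by (intro mult_left_mono) auto
  moreover have "b ^ Suc n = 4 ^ Suc n * Q y ^ Suc n" by (simp add: b_def power_mult_distrib)
  ultimately have "(A + u) ^ Suc n \<le> A ^ Suc n + (real (Suc n) * A ^ n * 2) * (z \<bullet> y)
     + ((real (Suc n) + 3 ^ Suc n) * 4 ^ Suc n * A ^ n) * Q y ^ Suc n"
    using main by (simp add: algebra_simps)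
  then have "Q (z + y) ^ Suc n \<le> A ^ Suc n + (real (Suc n) * A ^ n * 2) * (z \<bullet> y)
     + ((real (Suc n) + 3 ^ Suc n) * 4 ^ Suc n * A ^ n) * Q y ^ Suc n" by (simp only: Au)
  then show ?thesis by (simp only: A_def)
qed

context dens begin

definition mu :: "nat \<Rightarrow> real" where "mu k = (\<integral>x. Q x ^ k * \<phi> x \<partial>lborel)"
definition Kc :: "nat \<Rightarrow> real" where "Kc n = (real (Suc n) + 3 ^ Suc n) * 4 ^ Suc n * mu (Suc n)"

lemma mu_nonneg: "0 \<le> mu k"
  unfolding mu_def by (intro integral_nonneg_AE AE_I2 mult_nonneg_nonneg zero_le_power) (auto simp: nonneg less_imp_le[OF Q_pos])

lemma Kc_nonneg: "0 \<le> Kc n" unfolding Kc_def using mu_nonneg by simp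

lemma per_z: "(\<integral>\<^sup>+y. ennreal (\<phi> y * Q (z + y) ^ Suc n) \<partial>lborel) \<le> ennreal (Q z ^ Suc n + Kc n * Q z ^ n)"
proof -
  define c1 where "c1 = real (Suc n) * Q z ^ n * 2"
  define c2 where "c2 = (real (Suc n) + 3 ^ Suc n) * 4 ^ Suc n * Q z ^ n"
  have int_l: "integrable lborel (\<lambda>y. \<phi> y * Q (z + y) ^ Suc n)"
  proof (rule Bochner_Integration.integrable_bound[OF integrable_mult_right[OF poly_integrable[of "Suc n"], of "(2 * Q z) ^ Suc n"]])
    show "(\<lambda>y. \<phi> y * Q (z + y) ^ Suc n) \<in> borel_measurable lborel" by measurable
    show "AE y in lborel. norm (\<phi> y * Q (z + y) ^ Suc n) \<le> norm ((2 * Q z) ^ Suc n * (Q y ^ Suc n * \<phi> y))"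
    proof (rule AE_I2)
      fix y
      have "Q (z + y) ^ Suc n \<le> (2 * Q z * Q y) ^ Suc n"
        using Q_add_le Q_ge1[of "z+y"] by (intro power_mono) auto
      then have "\<phi> y * Q (z + y) ^ Suc n \<le> \<phi> y * (2 * Q z * Q y) ^ Suc n"
        using nonneg by (intro mult_left_mono) auto
      moreover have "0 \<le> \<phi> y * Q (z + y) ^ Suc n" using nonneg Q_ge1[of "z+y"] by simp
      ultimately show "norm (\<phi> y * Q (z + y) ^ Suc n) \<le> norm ((2 * Q z) ^ Suc n * (Q y ^ Suc n * \<phi> y))"
        using nonneg[of y] Q_ge1[of z] Q_ge1[of y] by (simp add: power_mult_distrib algebra_simps)
    qed
  qed
  have int_v: "integrable lborel (\<lambda>y. \<phi> y *\<^sub>R y)"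
  proof (rule Bochner_Integration.integrable_bound[OF poly_integrable[of 1]])
    show "(\<lambda>y. \<phi> y *\<^sub>R y) \<in> borel_measurable lborel" by measurable
    show "AE y in lborel. norm (\<phi> y *\<^sub>R y) \<le> norm (Q y ^ 1 * \<phi> y)"
    proof (rule AE_I2)
      fix y :: "real^'n"
      have "norm y \<le> Q y"
      proof -
        have "2 * norm y \<le> 1 + norm y ^ 2"
          using sum_squares_bound[of 1 "norm y"] by (simp add: power2_eq_square algebra_simps)
        then have "norm y \<le> 1 + norm y ^ 2" using norm_ge_zero[of y] by linarith
        then show ?thesis by (simp add: Q_def)
      qed
      then show "norm (\<phi> y *\<^sub>R y) \<le> norm (Q y ^ 1 * \<phi> y)"
        using mult_right_mono[OF \<open>norm y \<le> Q y\<close> nonneg[of y]] nonneg[of y] Q_ge1[of y] by (simp add: mult.commute)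
    qed
  qed
  have int_R1: "integrable lborel (\<lambda>y. \<phi> y * Q z ^ Suc n)"
    using phi_integrable by simp
  have int_R2: "integrable lborel (\<lambda>y. c1 * (z \<bullet> (\<phi> y *\<^sub>R y)))"
    by (intro integrable_mult_right integrable_inner_right int_v)
  have int_R3: "integrable lborel (\<lambda>y. c2 * (Q y ^ Suc n * \<phi> y))"
    by (intro integrable_mult_right poly_integrable)
  have pt: "\<phi> y * Q (z + y) ^ Suc n \<le> \<phi> y * Q z ^ Suc n + c1 * (z \<bullet> (\<phi> y *\<^sub>R y)) + c2 * (Q y ^ Suc n * \<phi> y)" for y
  proof -
    have "\<phi> y * Q (z + y) ^ Suc n \<le> \<phi> y * (Q z ^ Suc n + c1 * (z \<bullet> y) + c2 * Q y ^ Suc n)"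
      using Q_pointwise[of z y n] nonneg[of y] unfolding c1_def c2_def by (intro mult_left_mono) auto
    then show ?thesis by (simp add: algebra_simps)
  qed
  have "(\<integral>y. \<phi> y * Q (z + y) ^ Suc n \<partial>lborel)
     \<le> (\<integral>y. \<phi> y * Q z ^ Suc n + c1 * (z \<bullet> (\<phi> y *\<^sub>R y)) + c2 * (Q y ^ Suc n * \<phi> y) \<partial>lborel)"
    by (intro integral_mono int_l Bochner_Integration.integrable_add int_R1 int_R2 int_R3 pt)
  also have "\<dots> = (\<integral>y. \<phi> y * Q z ^ Suc n \<partial>lborel) + (\<integral>y. c1 * (z \<bullet> (\<phi> y *\<^sub>R y)) \<partial>lborel)
       + (\<integral>y. c2 * (Q y ^ Suc n * \<phi> y) \<partial>lborel)"
    by (simp only: Bochner_Integration.integral_add[OF Bochner_Integration.integrable_add[OF int_R1 int_R2] int_R3]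
         Bochner_Integration.integral_add[OF int_R1 int_R2])
  also have "\<dots> = Q z ^ Suc n + Kc n * Q z ^ n"
  proof -
    have i1: "(\<integral>y. \<phi> y * Q z ^ Suc n \<partial>lborel) = Q z ^ Suc n"
      using int1 by (simp only: integral_mult_left_zero)
    have "(\<integral>y. z \<bullet> (\<phi> y *\<^sub>R y) \<partial>lborel) = z \<bullet> (\<integral>y. \<phi> y *\<^sub>R y \<partial>lborel)"
      by (rule integral_inner_right) (rule int_v)
    then have i2: "(\<integral>y. c1 * (z \<bullet> (\<phi> y *\<^sub>R y)) \<partial>lborel) = 0"
      using mean0 by (simp only: integral_mult_right_zero) simp
    have i3: "(\<integral>y. c2 * (Q y ^ Suc n * \<phi> y) \<partial>lborel) = c2 * mu (Suc n)"
      unfolding mu_def by (rule integral_mult_right_zero)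
    show ?thesis unfolding i1 i2 i3 by (simp add: Kc_def c2_def)
  qed
  finally have le: "(\<integral>y. \<phi> y * Q (z + y) ^ Suc n \<partial>lborel) \<le> Q z ^ Suc n + Kc n * Q z ^ n" .
  have "(\<integral>\<^sup>+y. ennreal (\<phi> y * Q (z + y) ^ Suc n) \<partial>lborel) = ennreal (\<integral>y. \<phi> y * Q (z + y) ^ Suc n \<partial>lborel)"
    using int_l by (subst nn_integral_eq_integral) (auto intro!: AE_I2 mult_nonneg_nonneg simp: nonneg less_imp_le[OF Q_pos])
  also have "\<dots> \<le> ennreal (Q z ^ Suc n + Kc n * Q z ^ n)" using le by (rule ennreal_leI)
  finally show ?thesis .
qed

end



lemma far_Q:
  fixes v :: "'a::real_normed_vector"
  assumes "r / 2 \<le> norm v" "0 < r"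
  shows "r ^ (2*m) \<le> 4 ^ m * Q v ^ m"
proof -
  have "(r/2)^2 \<le> norm v ^ 2" using assms by (intro power_mono) auto
  also have "\<dots> \<le> Q v" by (simp add: Q_def)
  finally have "((r/2)^2) ^ m \<le> Q v ^ m" by (intro power_mono) auto
  moreover have "((r/2)^2) ^ m = r ^ (2*m) / 4 ^ m"
  proof -
    have "((r/2)^2) ^ m = (r^2/4) ^ m" by (simp add: power_divide)
    also have "\<dots> = (r^2)^m / 4^m" by (simp add: power_divide)
    also have "(r^2)^m = r^(2*m)" by (simp add: power_mult)
    finally show ?thesis .
  qed
  ultimately show ?thesis by (simp add: field_simps)
qed

context dens begin

lemma P_meas[measurable]: "P j \<in> borel_measurable borel" using P_props by blast
lemma P_nonneg: "0 \<le> P j x" using P_props by blast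
lemma P_le: "P j x \<le> M0" using P_props by blast
lemma P_nn1: "(\<integral>\<^sup>+x. ennreal (P j x) \<partial>lborel) = 1" using P_props by blast

lemma P_int: "integrable lborel (\<lambda>y. \<phi> y * P j (x - y))"
proof (rule Bochner_Integration.integrable_bound[OF integrable_mult_right[OF phi_integrable, of M0]])
  show "(\<lambda>y. \<phi> y * P j (x - y)) \<in> borel_measurable lborel" by measurable
  show "AE y in lborel. norm (\<phi> y * P j (x - y)) \<le> norm (M0 * \<phi> y)"
    using nonneg P_nonneg P_le M0_nonneg by (auto intro!: AE_I2 simp: abs_mult mult.commute[of M0] mult_left_mono)
qed

lemma P_Suc_nn: "ennreal (P (Suc j) x) = (\<integral>\<^sup>+y. ennreal (\<phi> y * P j (x - y)) \<partial>lborel)"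
  unfolding P_Suc using P_int nonneg P_nonneg by (subst nn_integral_eq_integral) auto

definition Mom :: "nat \<Rightarrow> nat \<Rightarrow> ennreal" where
  "Mom j m = (\<integral>\<^sup>+x. ennreal (Q x ^ m * P j x) \<partial>lborel)"

lemma Mom_0: "Mom j 0 = 1" using P_nn1 by (simp add: Mom_def)

lemma Mom_first: "Mom 0 m = ennreal (mu m)"
  unfolding Mom_def mu_def P_0 using poly_integrable
  by (subst nn_integral_eq_integral) (auto intro!: AE_I2 mult_nonneg_nonneg simp: nonneg less_imp_le[OF Q_pos])

lemma Mom_step: "Mom (Suc j) (Suc n) \<le> Mom j (Suc n) + ennreal (Kc n) * Mom j n"
proof -
  let ?m = "Suc n"
  have "Mom (Suc j) ?m = (\<integral>\<^sup>+x. \<integral>\<^sup>+y. ennreal (Q x ^ ?m * (\<phi> y * P j (x - y))) \<partial>lborel \<partial>lborel)"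
  proof -
    have "ennreal (Q x ^ ?m * P (Suc j) x) = (\<integral>\<^sup>+y. ennreal (Q x ^ ?m * (\<phi> y * P j (x - y))) \<partial>lborel)" for x
    proof -
      have "ennreal (Q x ^ ?m * P (Suc j) x) = ennreal (Q x ^ ?m) * ennreal (P (Suc j) x)"
        by (rule ennreal_mult) (auto simp: less_imp_le[OF Q_pos] P_nonneg)
      also have "\<dots> = ennreal (Q x ^ ?m) * (\<integral>\<^sup>+y. ennreal (\<phi> y * P j (x - y)) \<partial>lborel)"
        by (simp only: P_Suc_nn)
      also have "\<dots> = (\<integral>\<^sup>+y. ennreal (Q x ^ ?m) * ennreal (\<phi> y * P j (x - y)) \<partial>lborel)"
        by (rule nn_integral_cmult[symmetric]) measurable
      also have "\<dots> = (\<integral>\<^sup>+y. ennreal (Q x ^ ?m * (\<phi> y * P j (x - y))) \<partial>lborel)"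
        by (intro nn_integral_cong ennreal_mult[symmetric]) (auto simp: less_imp_le[OF Q_pos] P_nonneg nonneg)
      finally show ?thesis .
    qed
    then show ?thesis unfolding Mom_def by simp
  qed
  also have "\<dots> = (\<integral>\<^sup>+y. \<integral>\<^sup>+x. ennreal (Q x ^ ?m * (\<phi> y * P j (x - y))) \<partial>lborel \<partial>lborel)"
    by (rule lborel_pair.Fubini'[symmetric]) measurable
  also have "\<dots> = (\<integral>\<^sup>+y. \<integral>\<^sup>+z. ennreal (Q (z + y) ^ ?m * (\<phi> y * P j z)) \<partial>lborel \<partial>lborel)"
  proof (rule nn_integral_cong)
    fix y :: "real^'n"
    have "(\<integral>\<^sup>+x. ennreal (Q x ^ ?m * (\<phi> y * P j (x - y))) \<partial>lborel)
        = (\<integral>\<^sup>+x. (\<lambda>z. ennreal (Q (z + y) ^ ?m * (\<phi> y * P j z))) (x - y) \<partial>lborel)" by simp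
    also have "\<dots> = (\<integral>\<^sup>+z. ennreal (Q (z + y) ^ ?m * (\<phi> y * P j z)) \<partial>lborel)"
      by (rule nn_integral_translate) measurable
    finally show "(\<integral>\<^sup>+x. ennreal (Q x ^ ?m * (\<phi> y * P j (x - y))) \<partial>lborel)
        = (\<integral>\<^sup>+z. ennreal (Q (z + y) ^ ?m * (\<phi> y * P j z)) \<partial>lborel)" .
  qed
  also have "\<dots> = (\<integral>\<^sup>+z. \<integral>\<^sup>+y. ennreal (Q (z + y) ^ ?m * (\<phi> y * P j z)) \<partial>lborel \<partial>lborel)"
    by (rule lborel_pair.Fubini') measurable
  also have "\<dots> = (\<integral>\<^sup>+z. ennreal (P j z) * \<integral>\<^sup>+y. ennreal (\<phi> y * Q (z + y) ^ ?m) \<partial>lborel \<partial>lborel)"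
  proof (rule nn_integral_cong)
    fix z :: "real^'n"
    have "(\<integral>\<^sup>+y. ennreal (Q (z + y) ^ ?m * (\<phi> y * P j z)) \<partial>lborel)
        = (\<integral>\<^sup>+y. ennreal (P j z) * ennreal (\<phi> y * Q (z + y) ^ ?m) \<partial>lborel)"
    proof (rule nn_integral_cong)
      fix y :: "real^'n"
      have "ennreal (P j z) * ennreal (\<phi> y * Q (z + y) ^ ?m) = ennreal (P j z * (\<phi> y * Q (z + y) ^ ?m))"
        by (rule ennreal_mult[symmetric]) (auto simp: P_nonneg nonneg less_imp_le[OF Q_pos])
      also have "P j z * (\<phi> y * Q (z + y) ^ ?m) = Q (z + y) ^ ?m * (\<phi> y * P j z)" by (simp only: mult_ac)
      finally show "ennreal (Q (z + y) ^ ?m * (\<phi> y * P j z)) = ennreal (P j z) * ennreal (\<phi> y * Q (z + y) ^ ?m)" by simp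
    qed
    also have "\<dots> = ennreal (P j z) * \<integral>\<^sup>+y. ennreal (\<phi> y * Q (z + y) ^ ?m) \<partial>lborel"
      by (rule nn_integral_cmult) measurable
    finally show "(\<integral>\<^sup>+y. ennreal (Q (z + y) ^ ?m * (\<phi> y * P j z)) \<partial>lborel)
        = ennreal (P j z) * \<integral>\<^sup>+y. ennreal (\<phi> y * Q (z + y) ^ ?m) \<partial>lborel" .
  qed
  also have "\<dots> \<le> (\<integral>\<^sup>+z. ennreal (P j z) * ennreal (Q z ^ ?m + Kc n * Q z ^ n) \<partial>lborel)"
    by (intro nn_integral_mono mult_left_mono per_z) auto
  also have "\<dots> = (\<integral>\<^sup>+z. ennreal (Q z ^ ?m * P j z) + ennreal (Kc n) * ennreal (Q z ^ n * P j z) \<partial>lborel)"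
  proof (rule nn_integral_cong)
    fix z :: "real^'n"
    have q1: "0 \<le> Q z ^ ?m * P j z" "0 \<le> Q z ^ n * P j z" "0 \<le> Q z ^ ?m + Kc n * Q z ^ n"
      using Kc_nonneg by (auto simp: P_nonneg less_imp_le[OF Q_pos])
    have "ennreal (P j z) * ennreal (Q z ^ ?m + Kc n * Q z ^ n) = ennreal (P j z * (Q z ^ ?m + Kc n * Q z ^ n))"
      by (rule ennreal_mult[symmetric]) (use q1 in \<open>auto simp: P_nonneg\<close>)
    also have "P j z * (Q z ^ ?m + Kc n * Q z ^ n) = Q z ^ ?m * P j z + Kc n * (Q z ^ n * P j z)"
      by (simp only: algebra_simps)
    also have "ennreal (Q z ^ ?m * P j z + Kc n * (Q z ^ n * P j z)) = ennreal (Q z ^ ?m * P j z) + ennreal (Kc n * (Q z ^ n * P j z))"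
      by (rule ennreal_plus) (use q1 Kc_nonneg in auto)
    also have "ennreal (Kc n * (Q z ^ n * P j z)) = ennreal (Kc n) * ennreal (Q z ^ n * P j z)"
      by (rule ennreal_mult) (use q1 Kc_nonneg in auto)
    finally show "ennreal (P j z) * ennreal (Q z ^ ?m + Kc n * Q z ^ n) = ennreal (Q z ^ ?m * P j z) + ennreal (Kc n) * ennreal (Q z ^ n * P j z)" .
  qed
  also have "\<dots> = Mom j ?m + ennreal (Kc n) * Mom j n"
    unfolding Mom_def by (subst nn_integral_add) (auto simp: nn_integral_cmult)
  finally show ?thesis .
qed

end



context dens begin

lemma Mom_bound: "\<exists>C\<ge>0. \<forall>j. Mom j m \<le> ennreal (C * real (Suc j) ^ m)"
proof (induction m)
  case 0 then show ?case by (intro exI[of _ 1]) (simp add: Mom_0)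
next
  case (Suc n)
  then obtain C where C0: "C \<ge> 0" and C: "\<And>j. Mom j n \<le> ennreal (C * real (Suc j) ^ n)" by blast
  define E where "E = mu (Suc n) + Kc n * C"
  have KC: "0 \<le> Kc n * C" using Kc_nonneg C0 by simp
  have E0: "E \<ge> 0" using mu_nonneg KC by (simp add: E_def)
  have "Mom j (Suc n) \<le> ennreal (E * real (Suc j) ^ Suc n)" for j
  proof (induction j)
    case 0 then show ?case using KC by (simp add: Mom_first E_def ennreal_leI)
  next
    case (Suc j)
    define a where "a = real (Suc j)"
    have a1: "a \<ge> 1" by (simp add: a_def)
    have "Mom (Suc j) (Suc n) \<le> Mom j (Suc n) + ennreal (Kc n) * Mom j n" by (rule Mom_step)
    also have "\<dots> \<le> ennreal (E * a ^ Suc n) + ennreal (Kc n) * ennreal (C * a ^ n)"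
      using Suc C[of j] unfolding a_def by (intro add_mono mult_left_mono) auto
    also have "\<dots> = ennreal (E * a ^ Suc n + Kc n * (C * a ^ n))"
      using E0 C0 a1 Kc_nonneg by (simp add: ennreal_mult[symmetric])
    also have "\<dots> \<le> ennreal (E * (a + 1) ^ Suc n)"
    proof (rule ennreal_leI)
      have an: "0 \<le> a ^ n" using a1 by simp
      have "Kc n * (C * a ^ n) \<le> E * a ^ n"
        using mult_right_mono[of "Kc n * C" E "a ^ n"] an mu_nonneg by (simp add: E_def mult.assoc)
      also have "E * a ^ n \<le> E * (a + 1) ^ n"
        using a1 E0 by (intro mult_left_mono power_mono) auto
      finally have "E * a ^ Suc n + Kc n * (C * a ^ n) \<le> E * a * a ^ n + E * (a + 1) ^ n" by simp
      also have "\<dots> \<le> E * a * (a + 1) ^ n + E * (a + 1) ^ n"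
        using a1 E0 by (intro add_mono mult_left_mono power_mono) auto
      also have "\<dots> = E * (a + 1) ^ Suc n" by (simp add: algebra_simps)
      finally show "E * a ^ Suc n + Kc n * (C * a ^ n) \<le> E * (a + 1) ^ Suc n" .
    qed
    finally show ?case by (simp add: a_def add.commute)
  qed
  then show ?case using E0 by blast
qed

lemma phi_far:
  assumes x: "x \<noteq> 0" and B: "\<And>w. Q w ^ m * \<phi> w \<le> B"
  shows "\<phi> w * norm x ^ (2*m) \<le> B * 4 ^ m * Q (x - w) ^ m"
proof -
  define r where "r = norm x"
  have r0: "0 < r" using x by (simp add: r_def)
  have Qm: "\<And>v. 1 \<le> Q v ^ m" by (intro one_le_power Q_ge1)
  have phiB: "\<phi> w \<le> B"
    using mult_right_mono[OF Qm[of w] nonneg[of w]] B[of w] by simp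
  show ?thesis
  proof (cases "r / 2 \<le> norm (x - w)")
    case True
    have "r ^ (2*m) \<le> 4 ^ m * Q (x - w) ^ m" by (rule far_Q[OF True r0])
    from mult_mono[OF phiB this] nonneg[of w] r0 order_trans[OF nonneg[of w] phiB]
    show ?thesis by (simp add: r_def mult_ac)
  next
    case False
    then have "r / 2 \<le> norm w"
      using norm_triangle_ineq[of "x - w" w] by (simp add: r_def)
    then have "r ^ (2*m) \<le> 4 ^ m * Q w ^ m" by (rule far_Q[OF _ r0])
    then have "\<phi> w * r ^ (2*m) \<le> \<phi> w * (4 ^ m * Q w ^ m)" using nonneg by (intro mult_left_mono) auto
    also have "\<dots> = 4 ^ m * (Q w ^ m * \<phi> w)" by (simp add: mult_ac)
    also have "\<dots> \<le> 4 ^ m * B" using B[of w] by (intro mult_left_mono) auto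
    also have "\<dots> \<le> 4 ^ m * B * Q (x - w) ^ m"
    proof -
      have "0 \<le> 4 ^ m * B" using phiB nonneg[of w] by simp
      from mult_left_mono[OF Qm[of "x - w"] this] show ?thesis by simp
    qed
    finally show ?thesis by (simp add: r_def mult_ac)
  qed
qed

lemma dens_bound: "\<exists>D\<ge>0. \<forall>j x. x \<noteq> 0 \<longrightarrow> P j x * norm x ^ (2*m) \<le> D * real (Suc j) ^ m"
proof -
  obtain B where B: "\<And>w. Q w ^ m * \<phi> w \<le> B" using decay by blast
  have B0: "0 \<le> B" using B[of 0] nonneg[of 0] Q_ge1[of 0] by (smt (verit) mult_nonneg_nonneg zero_le_power)
  obtain C where C0: "C \<ge> 0" and C: "\<And>j. Mom j m \<le> ennreal (C * real (Suc j) ^ m)"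
    using Mom_bound by blast
  define D where "D = B * 4 ^ m * (1 + C)"
  have D0: "0 \<le> D" using B0 C0 by (simp add: D_def)
  have "P j x * norm x ^ (2*m) \<le> D * real (Suc j) ^ m" if x: "x \<noteq> 0" for j x
  proof (cases j)
    case 0
    have "P j x * norm x ^ (2*m) \<le> B * 4 ^ m * Q (x - x) ^ m"
      using phi_far[OF x B, of x] by (simp add: 0 P_0)
    also have "\<dots> = B * 4 ^ m" by (simp add: Q_def)
    also have "\<dots> \<le> D * real (Suc j) ^ m" using mult_left_mono[of 1 "1+C" "B*4^m"] B0 C0 by (simp add: D_def 0)
    finally show ?thesis .
  next
    case (Suc i)
    define r where "r = norm x"
    have r0: "0 < r" using x by (simp add: r_def)
    define c where "c = B * 4 ^ m / r ^ (2*m)"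
    have c0: "0 \<le> c" using B0 r0 by (simp add: c_def)
    have pt: "\<phi> y \<le> c * Q (x - y) ^ m" for y
    proof -
      have "\<phi> y * r ^ (2*m) \<le> B * 4 ^ m * Q (x - y) ^ m" using phi_far[OF x B, of y] by (simp add: r_def)
      then show ?thesis using r0 by (simp add: c_def field_simps)
    qed
    have "ennreal (P (Suc i) x) = (\<integral>\<^sup>+y. ennreal (\<phi> y * P i (x - y)) \<partial>lborel)" by (rule P_Suc_nn)
    also have "\<dots> \<le> (\<integral>\<^sup>+y. ennreal c * ennreal (Q (x - y) ^ m * P i (x - y)) \<partial>lborel)"
    proof (rule nn_integral_mono)
      fix y :: "real^'n"
      have "\<phi> y * P i (x - y) \<le> c * Q (x - y) ^ m * P i (x - y)"
        using pt[of y] P_nonneg by (intro mult_right_mono) auto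
      then have "ennreal (\<phi> y * P i (x - y)) \<le> ennreal (c * (Q (x - y) ^ m * P i (x - y)))"
        by (intro ennreal_leI) (simp add: mult_ac)
      also have "\<dots> = ennreal c * ennreal (Q (x - y) ^ m * P i (x - y))"
        using c0 by (intro ennreal_mult) (auto simp: P_nonneg less_imp_le[OF Q_pos])
      finally show "ennreal (\<phi> y * P i (x - y)) \<le> ennreal c * ennreal (Q (x - y) ^ m * P i (x - y))" .
    qed
    also have "\<dots> = ennreal c * (\<integral>\<^sup>+y. ennreal (Q (x - y) ^ m * P i (x - y)) \<partial>lborel)"
      by (rule nn_integral_cmult) measurable
    also have "(\<integral>\<^sup>+y. ennreal (Q (x - y) ^ m * P i (x - y)) \<partial>lborel) = Mom i m"
      unfolding Mom_def by (rule nn_integral_reflect[where g="\<lambda>v. ennreal (Q v ^ m * P i v)"]) measurable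
    also have "ennreal c * Mom i m \<le> ennreal c * ennreal (C * real (Suc i) ^ m)"
      by (intro mult_left_mono C) auto
    also have "\<dots> = ennreal (c * (C * real (Suc i) ^ m))"
      using c0 C0 by (simp add: ennreal_mult[symmetric])
    finally have le: "P (Suc i) x \<le> c * (C * real (Suc i) ^ m)"
      using c0 C0 by (subst (asm) ennreal_le_iff) auto
    have "P (Suc i) x * r ^ (2*m) \<le> c * (C * real (Suc i) ^ m) * r ^ (2*m)"
      using le r0 by (intro mult_right_mono) auto
    also have "\<dots> = B * 4 ^ m * C * real (Suc i) ^ m"
      using r0 by (simp add: c_def field_simps)
    also have "\<dots> \<le> D * real (Suc (Suc i)) ^ m"
    proof -
      have "B * 4 ^ m * C \<le> D" using B0 C0 by (simp add: D_def algebra_simps)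
      moreover have "real (Suc i) ^ m \<le> real (Suc (Suc i)) ^ m" by (intro power_mono) auto
      ultimately show ?thesis using D0 B0 C0 by (intro mult_mono) auto
    qed
    finally show ?thesis by (simp add: Suc r_def)
  qed
  then show ?thesis using D0 by blast
qed

end



definition hq :: "nat \<Rightarrow> int \<Rightarrow> real" where "hq q t = 1 / (1 + (real_of_int t)^2) ^ q"

lemma hq_nonneg: "0 \<le> hq q t" by (simp add: hq_def)

lemma h1_summable: "(\<lambda>t::int. 1 / (1 + (real_of_int t)^2)) summable_on UNIV"
proof -
  define g where "g = (\<lambda>t::int. 1 / (1 + (real_of_int t)^2))"
  have sn: "summable (\<lambda>n::nat. 1 / (1 + (real n)^2))"
  proof (rule summable_comparison_test'[OF inverse_power_summable[of 2, where 'a=real]])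
    fix n :: nat assume "n \<ge> 1"
    have "0 < 1 + (real n)^2" by (simp add: add_pos_nonneg)
    with \<open>n \<ge> 1\<close> show "norm (1 / (1 + (real n)^2)) \<le> inverse (real n ^ 2)"
      by (simp add: divide_simps)
  qed simp
  then have sn': "(\<lambda>n::nat. 1 / (1 + (real n)^2)) summable_on UNIV"
    by (subst summable_on_UNIV_nonneg_real_iff) auto
  have "g summable_on (int ` UNIV)"
    by (subst summable_on_reindex) (use sn' in \<open>auto simp: g_def o_def\<close>)
  moreover have "g summable_on ((\<lambda>n. - int n) ` UNIV)"
    by (subst summable_on_reindex) (use sn' in \<open>auto simp: g_def o_def inj_on_def\<close>)
  ultimately have "g summable_on (int ` UNIV \<union> (\<lambda>n. - int n) ` UNIV)"
    by (rule summable_on_union)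
  also have "int ` UNIV \<union> (\<lambda>n. - int n) ` UNIV = UNIV"
  proof -
    have "t \<in> int ` UNIV \<union> (\<lambda>n. - int n) ` UNIV" for t :: int
    proof (cases "t \<ge> 0")
      case True then have "t = int (nat t)" by simp
      then show ?thesis by blast
    next
      case False then have "t = - int (nat (-t))" by simp
      then show ?thesis by blast
    qed
    then show ?thesis by blast
  qed
  finally show ?thesis by (simp add: g_def)
qed

lemma hq_summable: "q \<ge> 1 \<Longrightarrow> hq q summable_on UNIV"
proof (rule summable_on_comparison_test[OF h1_summable])
  fix t :: int assume q: "q \<ge> 1"
  have "1 + (real_of_int t)^2 \<le> (1 + (real_of_int t)^2) ^ q"
    using power_increasing[of 1 q "1 + (real_of_int t)^2"] q by simp
  then show "hq q t \<le> 1 / (1 + (real_of_int t)^2)"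
    unfolding hq_def by (intro divide_left_mono) (auto simp: add_pos_nonneg)
qed (simp add: hq_nonneg)

definition Gq :: "nat \<Rightarrow> ('n::finite \<Rightarrow> int) \<Rightarrow> real" where
  "Gq q k = (\<Prod>i\<in>UNIV. hq q (k i))"

lemma Gq_nonneg: "0 \<le> Gq q k" unfolding Gq_def by (intro prod_nonneg) (simp add: hq_nonneg)

lemma Gq_facts:
  assumes q: "q \<ge> 1"
  shows "Gq q summable_on (UNIV :: ('n::finite \<Rightarrow> int) set)" "0 < infsum (Gq q) (UNIV :: ('n \<Rightarrow> int) set)"
proof -
  have abs: "(\<lambda>t. norm (hq q t)) summable_on UNIV" using hq_summable[OF q] by (simp add: hq_nonneg)
  have eq: "infsum (Gq q) (UNIV :: ('n \<Rightarrow> int) set) = (\<Prod>i\<in>(UNIV::'n set). infsum (hq q) UNIV)"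
    using infsum_prod_PiE_abs[of "UNIV :: 'n set" "\<lambda>i. hq q" "\<lambda>_. UNIV"] abs
    by (simp add: Gq_def[abs_def])
  have "infsum (hq q) UNIV = hq q 0 + infsum (hq q) (UNIV - {0})"
  proof -
    have "hq q summable_on (UNIV - {0})" using hq_summable[OF q] by (rule summable_on_subset) auto
    from infsum_insert[OF this, of 0] show ?thesis by (simp add: insert_absorb)
  qed
  moreover have "0 \<le> infsum (hq q) (UNIV - {0})" by (intro infsum_nonneg hq_nonneg)
  ultimately have pos: "0 < infsum (hq q) UNIV" by (simp add: hq_def)
  then show "0 < infsum (Gq q) (UNIV :: ('n \<Rightarrow> int) set)" unfolding eq by (intro prod_pos) auto
  then show "Gq q summable_on (UNIV :: ('n::finite \<Rightarrow> int) set)"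
    using infsum_not_exists by fastforce
qed

lemma lattice_pt_comp: "lattice_pt k $ i = real_of_int (k i)"
  by (simp add: lattice_pt_def)

lemma lattice_pt_0: "lattice_pt (\<lambda>_::'n::finite. 0::int) = 0"
  by (simp add: lattice_pt_def vec_eq_iff)

lemma lattice_pt_eq_0: "lattice_pt (k :: 'n::finite \<Rightarrow> int) = 0 \<longleftrightarrow> k = (\<lambda>_. 0)"
  by (auto simp: lattice_pt_def vec_eq_iff fun_eq_iff)

lemma lattice_bound:
  fixes k :: "'n::finite \<Rightarrow> int"
  assumes k: "k \<noteq> (\<lambda>_. 0)"
  shows "1 \<le> 2 ^ (CARD('n) * q) * norm (lattice_pt k) ^ (2 * (CARD('n) * q)) * Gq q k"
proof -
  define N where "N = norm (lattice_pt k) ^ 2"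
  have comp: "(real_of_int (k i))^2 \<le> N" for i
  proof -
    have h: "\<bar>real_of_int (k i)\<bar> \<le> norm (lattice_pt k)" using component_le_norm_cart[of "lattice_pt k" i]
      by (simp add: lattice_pt_comp)
    show ?thesis unfolding N_def using power_mono[OF h abs_ge_zero, of 2] by simp
  qed
  obtain i where i: "k i \<noteq> 0" using k by (auto simp: fun_eq_iff)
  then have "1 \<le> \<bar>k i\<bar>" by arith
  then have "1 \<le> real_of_int \<bar>k i\<bar>" by simp
  then have a1: "1 \<le> \<bar>real_of_int (k i)\<bar>" by simp
  have "1 \<le> (real_of_int (k i))^2" using power_mono[OF a1, of 2] by simp
  then have N1: "1 \<le> N" using comp[of i] by linarith
  define Pr where "Pr = (\<Prod>i\<in>(UNIV::'n set). (1 + (real_of_int (k i))^2) ^ q)"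
  have Pr_pos: "0 < Pr" unfolding Pr_def by (intro prod_pos) (auto simp: add_pos_nonneg)
  have G: "Gq q k = 1 / Pr"
    unfolding Gq_def hq_def Pr_def by (simp add: prod_dividef)
  have "Pr \<le> (\<Prod>i\<in>(UNIV::'n set). (1 + N) ^ q)"
    unfolding Pr_def by (intro prod_mono conjI power_mono) (auto simp: comp)
  also have "\<dots> = (1 + N) ^ (CARD('n) * q)" by (simp add: power_mult mult.commute)
  also have "\<dots> \<le> (2 * N) ^ (CARD('n) * q)" using N1 by (intro power_mono) auto
  also have "\<dots> = 2 ^ (CARD('n) * q) * norm (lattice_pt k) ^ (2 * (CARD('n) * q))"
    by (simp add: N_def power_mult_distrib power_mult)
  finally show ?thesis using Pr_pos by (simp add: G)
qed




lemma powr_arith: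
  fixes L \<epsilon> :: real and j d m :: nat
  assumes L: "L \<ge> 1" and j: "real j \<le> L powr (2 - \<epsilon>)" and em: "\<epsilon> * real m \<ge> real d + 2"
  shows "real j ^ m * L ^ d / L ^ (2 * m) \<le> L powr (-2)"
proof -
  have L0: "0 < L" using L by simp
  have "real j ^ m \<le> (L powr (2 - \<epsilon>)) ^ m" using j by (intro power_mono) auto
  also have "\<dots> = L powr ((2 - \<epsilon>) * real m)"
    using L0 by (simp add: powr_realpow[symmetric] powr_powr)
  finally have jm: "real j ^ m \<le> L powr ((2 - \<epsilon>) * real m)" .
  have e1: "L ^ d = L powr real d" using L0 by (simp add: powr_realpow)
  have e2: "L ^ (2 * m) = L powr real (2 * m)" using powr_realpow[OF L0, of "2*m"] by simp
  have "real j ^ m * L ^ d / L ^ (2 * m) \<le> L powr ((2 - \<epsilon>) * real m) * L ^ d / L ^ (2 * m)"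
    using jm L0 by (intro divide_right_mono mult_right_mono) auto
  also have "\<dots> = L powr ((2 - \<epsilon>) * real m + real d - real (2 * m))"
    unfolding e1 e2 by (simp add: powr_add powr_diff)
  also have "\<dots> \<le> L powr (-2)"
    using em L by (intro powr_mono) (auto simp: algebra_simps)
  finally show ?thesis .
qed

theorem mainTheorem7:
  fixes \<phi> :: "real^'n \<Rightarrow> real" and \<theta> :: real
  assumes "\<theta> > 0"
    and "schwartz \<phi>"
    and "\<And>x. \<phi> x \<ge> 0"
    and "integral\<^sup>L lborel \<phi> = 1"
    and "(\<integral>x. \<phi> x *\<^sub>R x \<partial>lborel) = 0"
  shows "\<forall>\<epsilon>>0. \<exists>C>0. \<forall>(L::real) (j::nat). L \<ge> 1 \<and> 1 \<le> j \<and> real j \<le> L powr (2 - \<epsilon>) \<longrightarrow>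
           \<bar>W \<theta> \<phi> L j - \<theta> * L ^ CARD('n) * conv_pow \<phi> j 0\<bar> \<le> C * L powr (-2)"
proof -
  note sf = schwartz_facts[OF assms(2)]
  interpret dens \<phi>
  proof
    show "\<phi> \<in> borel_measurable borel" using sf(1) by (rule borel_measurable_continuous_onI)
    show "\<And>x. 0 \<le> \<phi> x" by (rule assms(3))
    show "\<exists>B. \<forall>x. Q x ^ k * \<phi> x \<le> B" for k
      using sf(2)[of k] assms(3) by (simp add: Q_def)
    show "integral\<^sup>L lborel \<phi> = 1" by (rule assms(4))
    show "(\<integral>x. \<phi> x *\<^sub>R x \<partial>lborel) = 0" by (rule assms(5))
  qed
  show ?thesis
  proof (intro allI impI)
    fix \<epsilon> :: real assume \<epsilon>: "\<epsilon> > 0"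
    define d where "d = CARD('n)"
    define q where "q = nat \<lceil>(real d + 2) / \<epsilon>\<rceil> + 1"
    define m where "m = d * q"
    have q1: "q \<ge> 1" by (simp add: q_def)
    have d1: "d \<ge> 1" unfolding d_def using zero_less_card_finite[where 'a='n] by linarith
    have em: "\<epsilon> * real m \<ge> real d + 2"
    proof -
      have "(real d + 2) / \<epsilon> \<le> real q" unfolding q_def by linarith
      then have "real d + 2 \<le> \<epsilon> * real q" using \<epsilon> by (simp add: field_simps)
      also have "\<dots> \<le> \<epsilon> * real m" using \<epsilon> d1 mult_right_mono[of 1 "real d" "real q"] by (intro mult_left_mono) (auto simp: m_def)
      finally show ?thesis .
    qed
    obtain D where D0: "D \<ge> 0" and Db: "\<And>j x. x \<noteq> 0 \<Longrightarrow> P j x * norm x ^ (2*m) \<le> D * real (Suc j) ^ m"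
      using dens_bound[of m] by blast
    define S where "S = infsum (Gq q) (UNIV :: ('n \<Rightarrow> int) set)"
    have Gs: "Gq q summable_on (UNIV :: ('n \<Rightarrow> int) set)" and S0: "0 < S"
      using Gq_facts[OF q1] by (auto simp: S_def)
    define C where "C = \<theta> * D * 2 ^ m * S + 1"
    have K0: "0 \<le> \<theta> * D * 2 ^ m * S" using assms(1) D0 S0 by simp
    have C0: "C > 0" using K0 by (simp add: C_def)
    have "\<forall>(L::real) (j::nat). L \<ge> 1 \<and> 1 \<le> j \<and> real j \<le> L powr (2 - \<epsilon>) \<longrightarrow>
           \<bar>W \<theta> \<phi> L j - \<theta> * L ^ CARD('n) * conv_pow \<phi> j 0\<bar> \<le> C * L powr (-2)"
    proof (intro allI impI, elim conjE)
      fix L :: real and j :: nat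
      assume L1: "L \<ge> 1" and j1: "1 \<le> j" and jL: "real j \<le> L powr (2 - \<epsilon>)"
      have L0: "L > 0" using L1 by simp
      define f where "f = (\<lambda>k::'n \<Rightarrow> int. conv_pow \<phi> j (L *\<^sub>R lattice_pt k))"
      have Pj: "conv_pow \<phi> j = P (j - 1)" using j1 by (simp add: P_def)
      have fP: "f k = P (j - 1) (L *\<^sub>R lattice_pt k)" for k by (simp add: f_def Pj)
      have f_nn: "0 \<le> f k" for k by (simp add: fP P_nonneg)
      define c where "c = D * real j ^ m * 2 ^ m / L ^ (2*m)"
      have c0: "0 \<le> c" using D0 L0 by (simp add: c_def)
      have fb: "f k \<le> c * Gq q k" if k: "k \<noteq> (\<lambda>_. 0)" for k
      proof -
        define x where "x = L *\<^sub>R lattice_pt k"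
        define nk where "nk = norm (lattice_pt k)"
        have x0: "x \<noteq> 0" using k L0 by (simp add: x_def lattice_pt_eq_0)
        have nx: "norm x = L * nk" using L0 by (simp add: x_def nk_def)
        have D1: "P (j - 1) x * norm x ^ (2*m) \<le> D * real j ^ m"
          using Db[OF x0, of "j - 1"] j1 by simp
        have lb: "1 \<le> 2 ^ m * nk ^ (2*m) * Gq q k"
          using lattice_bound[OF k, of q] by (simp add: m_def d_def nk_def)
        have G0: "0 \<le> Gq q k" by (rule Gq_nonneg)
        have "f k = f k * 1" by simp
        also have "\<dots> \<le> f k * (2 ^ m * nk ^ (2*m) * Gq q k)" by (rule mult_left_mono[OF lb f_nn])
        also have "\<dots> = (P (j - 1) x * norm x ^ (2*m)) * (2 ^ m * Gq q k) / L ^ (2*m)"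
          using L0 by (simp add: fP x_def[symmetric] nx power_mult_distrib field_simps)
        also have "\<dots> \<le> (D * real j ^ m) * (2 ^ m * Gq q k) / L ^ (2*m)"
          using D1 G0 L0 by (intro divide_right_mono mult_right_mono) auto
        also have "\<dots> = c * Gq q k" by (simp add: c_def)
        finally show ?thesis .
      qed
      define Z where "Z = (UNIV :: ('n \<Rightarrow> int) set) - {\<lambda>_. 0}"
      have cGs: "(\<lambda>k. c * Gq q k) summable_on (UNIV :: ('n \<Rightarrow> int) set)"
        by (rule summable_on_cmult_right[OF Gs])
      have fs: "f summable_on Z"
      proof (rule summable_on_comparison_test)
        show "(\<lambda>k. c * Gq q k) summable_on Z" using cGs by (rule summable_on_subset) (simp add: Z_def)
      qed (auto simp: Z_def fb f_nn)
      have sumeq: "infsum f UNIV = f (\<lambda>_. 0) + infsum f Z"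
      proof -
        have "insert (\<lambda>_. 0) Z = UNIV" by (auto simp: Z_def)
        with infsum_insert[OF fs, of "\<lambda>_. 0"] show ?thesis by (simp add: Z_def)
      qed
      have f0: "f (\<lambda>_. 0) = conv_pow \<phi> j 0" by (simp add: f_def lattice_pt_0)
      define T where "T = infsum f Z"
      have T0: "0 \<le> T" unfolding T_def by (intro infsum_nonneg f_nn)
      have TS: "T \<le> c * S"
      proof -
        have "T \<le> infsum (\<lambda>k. c * Gq q k) (UNIV :: ('n \<Rightarrow> int) set)"
          unfolding T_def
          by (rule infsum_mono_neutral[OF fs cGs]) (auto simp: Z_def fb c0 Gq_nonneg)
        also have "\<dots> = c * S" by (simp add: S_def infsum_cmult_right')
        finally show ?thesis .
      qed
      have Weq: "W \<theta> \<phi> L j = \<theta> * L ^ CARD('n) * (conv_pow \<phi> j 0 + T)"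
        unfolding W_def using sumeq f0 by (simp add: f_def[symmetric] T_def)
      have "\<bar>W \<theta> \<phi> L j - \<theta> * L ^ CARD('n) * conv_pow \<phi> j 0\<bar> = \<theta> * L ^ d * T"
        using Weq assms(1) L0 T0 by (simp add: d_def algebra_simps)
      also have "\<dots> \<le> \<theta> * L ^ d * (c * S)"
        using TS assms(1) L0 by (intro mult_left_mono) auto
      also have "\<dots> = (\<theta> * D * 2 ^ m * S) * (real j ^ m * L ^ d / L ^ (2 * m))"
        by (simp add: c_def field_simps)
      also have "\<dots> \<le> (\<theta> * D * 2 ^ m * S) * L powr (-2)"
        by (intro mult_left_mono powr_arith[OF L1 jL em] K0)
      also have "\<dots> \<le> C * L powr (-2)"
        by (intro mult_right_mono) (auto simp: C_def)
      finally show "\<bar>W \<theta> \<phi> L j - \<theta> * L ^ CARD('n) * conv_pow \<phi> j 0\<bar> \<le> C * L powr (-2)" .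
    qed
    then show "\<exists>C>0. \<forall>(L::real) (j::nat). L \<ge> 1 \<and> 1 \<le> j \<and> real j \<le> L powr (2 - \<epsilon>) \<longrightarrow>
           \<bar>W \<theta> \<phi> L j - \<theta> * L ^ CARD('n) * conv_pow \<phi> j 0\<bar> \<le> C * L powr (-2)"
      using C0 by blast
  qed
qed



end
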